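(* Let $X$ be a compact metric space, $f_1,f_2:X\to X$ continuous and $F=\{f_1,f_2\}$. If $F$ has the (Hausdorff metric) average shadowing property, then $F^k$ has the average shadowing property for every integer $k>1$.
   Context: Throughout, $(X,d)$ is a compact metric space, $\mathbb{N}=\{0,1,2,\dots\}$, $\mathbb{Z}^+=\{1,2,\dots\}$. $\mathbb{K}(X)$ is the set of nonempty compact subsets of $X$ with the Hausdorff metric $d_H(A,B)=\max\{\sup_{a\in A}\inf_{b\in B}d(a,b),\sup_{b\in B}\inf_{a\in A}d(a,b)\}$; a point $x$ is identified with $\{x\}$. Multiple mappings: $F=\{f_1,f_2\}$ maps $x$ to $F(x)=\{f_1(x),f_2(x)\}$; for $n\ge1$, $F^n(x)=\{f_{i_1}\cdots f_{i_n}(x): i_1,\dots,i_n\in\{1,2\}\}$, $F^0(x)=\{x\}$; for $A\in\mathbb{K}(X)$, $F^n(A)=\bigcup_{a\in A}F^n(a)$. For $k\ge1$, $F^k$ is regarded as the multiple mappings consisting of the $2^k$ maps $f_{i_1}\cdots f_{i_k}$, so $(F^k)^n=F^{kn}$. Average shadowing: for $G=F$ or $G=F^k$, a sequence $\{A_n\}_{n\ge0}\subset\mathbb{K}(X)$ with $A_0$ a singleton is a $\delta$-average-pseudo-orbit of $G$ if there is $N(\delta)>0$ such that for all $n\ge N(\delta)$ and all $m\in\mathbb{Z}^+$, $\frac1n\sum_{i=0}^{n-1}d_H(G(A_{i+m}),A_{i+m+1})<\delta$. $G$ has the average shadowing property if for every $\epsilon>0$ there is $\delta>0$ such that for every $\delta$-average-pseudo-orbit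 $\{A_n\}$ of $G$ there is $y\in X$ with $\limsup_{n\to\infty}\frac1n\sum_{i=0}^{n-1}d_H(G^i(y),A_i)<\epsilon$. *)

theory Defs
  imports "HOL-Analysis.Analysis"
begin

definition hdist :: "'a::metric_space set \<Rightarrow> 'a set \<Rightarrow> real" where
  "hdist A B = max (SUP a\<in>A. infdist a B) (SUP b\<in>B. infdist b A)"

text \<open>A multiple mapping is represented by the set of its constituent maps.
  Its action on a set A is the union of the images.\<close>
definition mm_img :: "('a \<Rightarrow> 'a) set \<Rightarrow> 'a set \<Rightarrow> 'a set" where
  "mm_img G A = (\<Union>g\<in>G. g ` A)"

definition mm_iter :: "('a \<Rightarrow> 'a) set \<Rightarrow> nat \<Rightarrow> 'a set \<Rightarrow> 'a set" where
  "mm_iter G n A = (mm_img G ^^ n) A"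

fun mm_pow :: "('a \<Rightarrow> 'a) set \<Rightarrow> nat \<Rightarrow> ('a \<Rightarrow> 'a) set" where
  "mm_pow G 0 = {id}"
| "mm_pow G (Suc k) = {g \<circ> h | g h. g \<in> G \<and> h \<in> mm_pow G k}"

definition avg_pseudo_orbit :: "'a::metric_space set \<Rightarrow> ('a \<Rightarrow> 'a) set \<Rightarrow> real \<Rightarrow> (nat \<Rightarrow> 'a set) \<Rightarrow> bool" where
  "avg_pseudo_orbit X G \<delta> A \<longleftrightarrow>
     (\<forall>n. A n \<noteq> {} \<and> compact (A n) \<and> A n \<subseteq> X) \<and>
     (\<exists>x. A 0 = {x}) \<and>
     (\<exists>N::nat. N > 0 \<and> (\<forall>n\<ge>N. \<forall>m\<ge>1.
        (1 / real n) * (\<Sum>i<n. hdist (mm_img G (A (i + m))) (A (i + m + 1))) < \<delta>))"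

definition avg_shadowing :: "'a::metric_space set \<Rightarrow> ('a \<Rightarrow> 'a) set \<Rightarrow> bool" where
  "avg_shadowing X G \<longleftrightarrow>
     (\<forall>\<epsilon>>0. \<exists>\<delta>>0. \<forall>A. avg_pseudo_orbit X G \<delta> A \<longrightarrow>
        (\<exists>y\<in>X. limsup (\<lambda>n. ereal ((1 / real n) *
            (\<Sum>i<n. hdist (mm_iter G i {y}) (A i)))) < ereal \<epsilon>))"

end

theory Submission
  imports Defs
begin

lemma mm_iter_Suc: "mm_iter G (Suc j) A = mm_img G (mm_iter G j A)"
  by (simp add: mm_iter_def)

lemma mm_iter_0: "mm_iter G 0 A = A"
  by (simp add: mm_iter_def)

lemma mm_img_pow: "mm_img (mm_pow G k) A = mm_iter G k A"
proof (induction k arbitrary: A)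
  case 0 then show ?case by (simp add: mm_img_def mm_iter_def)
next
  case (Suc k)
  have "mm_img (mm_pow G (Suc k)) A = mm_img G (mm_img (mm_pow G k) A)"
  proof
    show "mm_img (mm_pow G (Suc k)) A \<subseteq> mm_img G (mm_img (mm_pow G k) A)"
      unfolding mm_img_def by force
    show "mm_img G (mm_img (mm_pow G k) A) \<subseteq> mm_img (mm_pow G (Suc k)) A"
    proof
      fix z assume "z \<in> mm_img G (mm_img (mm_pow G k) A)"
      then obtain g h a where "g \<in> G" "h \<in> mm_pow G k" "a \<in> A" "z = g (h a)"
        unfolding mm_img_def by blast
      moreover have "g \<circ> h \<in> mm_pow G (Suc k)" using calculation by auto
      moreover have "z \<in> (g \<circ> h) ` A" using calculation by simp
      ultimately show "z \<in> mm_img (mm_pow G (Suc k)) A"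
        unfolding mm_img_def by blast
    qed
  qed
  then show ?case using Suc by (simp add: mm_iter_Suc)
qed

lemma mm_iter_pow: "mm_iter (mm_pow G k) i A = mm_iter G (k * i) A"
proof -
  have "mm_img (mm_pow G k) = mm_img G ^^ k"
    using mm_img_pow[of G k] by (auto simp: mm_iter_def)
  then show ?thesis by (simp add: mm_iter_def funpow_mult mult.commute)
qed

lemma mm_iter_props:
  assumes "finite G" "G \<noteq> {}" "\<And>g. g \<in> G \<Longrightarrow> continuous_on X g \<and> g ` X \<subseteq> X"
    and "C \<subseteq> X" "compact C" "C \<noteq> {}"
  shows "mm_iter G j C \<subseteq> X \<and> compact (mm_iter G j C) \<and> mm_iter G j C \<noteq> {}"
proof (induction j)
  case 0 then show ?case using assms by (simp add: mm_iter_0)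
next
  case (Suc j)
  let ?D = "mm_iter G j C"
  have "mm_iter G (Suc j) C = (\<Union>g\<in>G. g ` ?D)" by (simp add: mm_iter_Suc mm_img_def)
  moreover have "(\<Union>g\<in>G. g ` ?D) \<subseteq> X" using Suc assms(3) by blast
  moreover have "compact (\<Union>g\<in>G. g ` ?D)"
  proof (intro compact_UN[OF assms(1)])
    fix g assume "g \<in> G"
    then have "continuous_on ?D g" using assms(3) Suc continuous_on_subset by blast
    then show "compact (g ` ?D)" using Suc compact_continuous_image by blast
  qed
  moreover have "(\<Union>g\<in>G. g ` ?D) \<noteq> {}" using Suc assms(2) by auto
  ultimately show ?case by simp
qed

lemma hdist_bounds:
  assumes "bounded X" "P \<noteq> {}" "Q \<noteq> {}" "P \<subseteq> X" "Q \<subseteq> X"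
  shows "0 \<le> hdist P Q \<and> hdist P Q \<le> diameter X"
proof -
  have b: "infdist a B \<le> diameter X" if ab: "a \<in> X" "B \<subseteq> X" "B \<noteq> {}" for a B
  proof -
    obtain b where "b \<in> B" using ab(3) by blast
    then have "infdist a B \<le> dist a b" by (rule infdist_le)
    also have "\<dots> \<le> diameter X" using diameter_bounded_bound[OF assms(1)] ab \<open>b\<in>B\<close> by auto
    finally show ?thesis .
  qed
  have s: "0 \<le> (SUP a\<in>A. infdist a B) \<and> (SUP a\<in>A. infdist a B) \<le> diameter X"
    if th: "A \<noteq> {}" "B \<noteq> {}" "A \<subseteq> X" "B \<subseteq> X" for A B
  proof -
    have bdd: "bdd_above ((\<lambda>a. infdist a B) ` A)"
      using b th by (intro bdd_aboveI[of _ "diameter X"]) auto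
    obtain a where "a \<in> A" using th(1) by blast
    have "0 \<le> infdist a B" by (rule infdist_nonneg)
    also have "\<dots> \<le> (SUP a\<in>A. infdist a B)" by (rule cSUP_upper[OF \<open>a\<in>A\<close> bdd])
    finally have "0 \<le> (SUP a\<in>A. infdist a B)" .
    moreover have "(SUP a\<in>A. infdist a B) \<le> diameter X"
      using th b by (intro cSUP_least) auto
    ultimately show ?thesis by simp
  qed
  show ?thesis using s[of P Q] s[of Q P] assms unfolding hdist_def by auto
qed

lemma hdist_self: "P \<noteq> {} \<Longrightarrow> hdist P P = 0"
  unfolding hdist_def by simp

lemma sum_shift: fixes n m :: nat shows "(\<Sum>i<n. g (i + m)) = (\<Sum>t\<in>{m..<m+n}. (g t :: real))"
proof (induction n)
  case 0 then show ?case by simp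
next
  case (Suc n)
  have "{m..<m + Suc n} = insert (m+n) {m..<m+n}" by auto
  then show ?case using Suc by (simp add: add.commute)
qed

lemma div_window:
  fixes k m n t :: nat
  assumes "k > 0" "m \<le> t" "t < m + n"
  shows "m div k \<le> t div k \<and> t div k < m div k + n"
proof
  show "m div k \<le> t div k" using assms by (simp add: div_le_mono)
  show "t div k < m div k + n"
  proof (rule ccontr)
    assume "\<not> ?thesis"
    then have h: "m div k + n \<le> t div k" by simp
    have "k * (m div k + n) \<le> k * (t div k)" using h by (rule mult_le_mono2)
    also have "\<dots> \<le> t" by (rule times_div_less_eq_dividend)
    finally have t1: "k * (m div k) + k * n \<le> t" by (simp add: algebra_simps)
    have "n \<ge> 1" using assms by simp
    then obtain n' where n': "n = Suc n'" by (cases n) auto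
    obtain k' where k': "k = Suc k'" using assms(1) by (cases k) auto
    have kn: "k * n \<ge> n + k - 1" using n' k' by simp
    have "m = k * (m div k) + m mod k" by simp
    moreover have "m mod k < k" using assms(1) by simp
    ultimately show False using t1 kn assms(3) by linarith
  qed
qed

theorem theorem4p2:
  fixes X :: "'a::metric_space set" and f1 f2 :: "'a \<Rightarrow> 'a"
  assumes "compact X"
    and "continuous_on X f1" and "f1 ` X \<subseteq> X"
    and "continuous_on X f2" and "f2 ` X \<subseteq> X"
    and "avg_shadowing X {f1, f2}"
  shows "\<forall>k::nat. k > 1 \<longrightarrow> avg_shadowing X (mm_pow {f1, f2} k)"
proof (intro allI impI)
  fix k :: nat assume k1: "k > 1"
  define F where "F = {f1, f2}"
  have Fp: "\<And>g. g \<in> F \<Longrightarrow> continuous_on X g \<and> g ` X \<subseteq> X"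
    using assms unfolding F_def by auto
  have Ffin: "finite F" and Fne: "F \<noteq> {}" unfolding F_def by auto
  have bX: "bounded X" using assms(1) by (rule compact_imp_bounded)
  define D where "D = diameter X"
  have iterp: "\<And>j C. C \<subseteq> X \<Longrightarrow> compact C \<Longrightarrow> C \<noteq> {} \<Longrightarrow>
      mm_iter F j C \<subseteq> X \<and> compact (mm_iter F j C) \<and> mm_iter F j C \<noteq> {}"
    using mm_iter_props[OF Ffin Fne Fp] by blast
  have hb: "\<And>P Q. P \<noteq> {} \<Longrightarrow> Q \<noteq> {} \<Longrightarrow> P \<subseteq> X \<Longrightarrow> Q \<subseteq> X \<Longrightarrow>
      0 \<le> hdist P Q \<and> hdist P Q \<le> D"
    using hdist_bounds[OF bX] unfolding D_def by blast
  have sh0: "avg_shadowing X F" using assms(6) unfolding F_def .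
  show "avg_shadowing X (mm_pow {f1, f2} k)"
    unfolding avg_shadowing_def F_def[symmetric]
  proof (intro allI impI)
    fix \<epsilon> :: real assume "\<epsilon> > 0"
    define \<epsilon>1 where "\<epsilon>1 = \<epsilon> / (2 * real k)"
    have "\<epsilon>1 > 0" using \<open>\<epsilon>>0\<close> k1 unfolding \<epsilon>1_def by simp
    then obtain \<delta> where "\<delta> > 0" and sh: "\<forall>A. avg_pseudo_orbit X F \<delta> A \<longrightarrow>
        (\<exists>y\<in>X. limsup (\<lambda>n. ereal ((1 / real n) *
            (\<Sum>i<n. hdist (mm_iter F i {y}) (A i)))) < ereal \<epsilon>1)"
      using sh0 unfolding avg_shadowing_def by blast
    show "\<exists>\<delta>'>0. \<forall>A. avg_pseudo_orbit X (mm_pow F k) \<delta>' A \<longrightarrow>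
        (\<exists>y\<in>X. limsup (\<lambda>n. ereal ((1 / real n) *
            (\<Sum>i<n. hdist (mm_iter (mm_pow F k) i {y}) (A i)))) < ereal \<epsilon>)"
    proof (intro exI[of _ "\<delta>/2"] conjI allI impI)
      show "\<delta>/2 > 0" using \<open>\<delta>>0\<close> by simp
      fix A assume po: "avg_pseudo_orbit X (mm_pow F k) (\<delta>/2) A"
      have Ap: "\<And>n. A n \<noteq> {} \<and> compact (A n) \<and> A n \<subseteq> X" using po unfolding avg_pseudo_orbit_def by blast
      obtain x where Ax: "A 0 = {x}" using po unfolding avg_pseudo_orbit_def by blast
      obtain NA :: nat where NA: "NA > 0" and poN: "\<forall>n\<ge>NA. \<forall>m\<ge>1.
        (1 / real n) * (\<Sum>i<n. hdist (mm_img (mm_pow F k) (A (i + m))) (A (i + m + 1))) < \<delta>/2"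
        using po unfolding avg_pseudo_orbit_def by blast
      define B where "B t = mm_iter F (t mod k) (A (t div k))" for t
      define c where "c p = hdist (mm_img (mm_pow F k) (A p)) (A (p+1))" for p
      have Bp: "B t \<subseteq> X \<and> compact (B t) \<and> B t \<noteq> {}" for t
        unfolding B_def using Ap[of "t div k"] by (intro iterp) auto
      have c0: "0 \<le> c p \<and> c p \<le> D" for p
      proof -
        have "mm_img (mm_pow F k) (A p) = mm_iter F k (A p)" by (rule mm_img_pow)
        moreover have "mm_iter F k (A p) \<subseteq> X \<and> compact (mm_iter F k (A p)) \<and> mm_iter F k (A p) \<noteq> {}"
          using Ap[of p] by (intro iterp) auto
        ultimately show ?thesis unfolding c_def using hb[of "mm_iter F k (A p)" "A (p+1)"] Ap[of "p+1"] by auto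
      qed
      have dB: "hdist (mm_img F (B t)) (B (t+1)) = (if t mod k = k - 1 then c (t div k) else 0)" for t
      proof (cases "t mod k = k - 1")
        case True
        then have "Suc (t mod k) = k" using k1 by simp
        then have e1: "(t+1) mod k = 0" "(t+1) div k = t div k + 1"
          by (simp_all add: mod_Suc div_Suc)
        have "mm_img F (B t) = mm_iter F (Suc (k-1)) (A (t div k))"
          unfolding B_def True by (simp add: mm_iter_Suc)
        also have "\<dots> = mm_img (mm_pow F k) (A (t div k))" using k1 by (simp add: mm_img_pow)
        finally show ?thesis using True e1 unfolding B_def c_def by (simp add: mm_iter_0)
      next
        case False
        have "t mod k < k" using k1 by simp
        then have "Suc (t mod k) \<noteq> k" using False by simp
        then have e1: "(t+1) mod k = Suc (t mod k)" "(t+1) div k = t div k"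
          by (simp_all add: mod_Suc div_Suc)
        have "mm_img F (B t) = B (t+1)" unfolding B_def e1 by (simp add: mm_iter_Suc)
        then show ?thesis using False hdist_self[of "B (t+1)"] Bp[of "t+1"] by simp
      qed
      have sumB: "(\<Sum>i<n. hdist (mm_img F (B (i + m))) (B (i + m + 1))) \<le> D + (\<Sum>i<n. c (i + max (m div k) 1))"
        for n m
      proof -
        define q where "q = max (m div k) 1"
        define T where "T = {t\<in>{m..<m+n}. t mod k = k - 1}"
        have "(\<Sum>i<n. hdist (mm_img F (B (i + m))) (B (i + m + 1)))
            = (\<Sum>t\<in>{m..<m+n}. hdist (mm_img F (B t)) (B (t + 1)))"
          using sum_shift[where g="\<lambda>t. hdist (mm_img F (B t)) (B (t + 1))" and n=n and m=m] by simp
        also have "\<dots> = (\<Sum>t\<in>{m..<m+n}. if t mod k = k - 1 then c (t div k) else 0)"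
          using dB by simp
        also have "\<dots> = (\<Sum>t\<in>T. c (t div k))"
          unfolding T_def by (rule sum.inter_filter[symmetric]) simp
        also have "\<dots> = (\<Sum>p\<in>(\<lambda>t. t div k) ` T. c p)"
        proof (rule sum.reindex[symmetric, unfolded comp_def])
          show "inj_on (\<lambda>t. t div k) T"
          proof (rule inj_onI)
            fix a b assume "a \<in> T" "b \<in> T" "a div k = b div k"
            then have "a mod k = b mod k" unfolding T_def by simp
            then show "a = b" using \<open>a div k = b div k\<close> by (metis div_mult_mod_eq)
          qed
        qed
        also have "\<dots> \<le> (\<Sum>p\<in>insert 0 {q..<q+n}. c p)"
        proof (rule sum_mono2)
          show "(\<lambda>t. t div k) ` T \<subseteq> insert 0 {q..<q + n}"
          proof
            fix p assume "p \<in> (\<lambda>t. t div k) ` T"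
            then obtain t where "t \<in> T" "p = t div k" by blast
            then have "m div k \<le> p \<and> p < m div k + n" using div_window[of k m t n] k1
              unfolding T_def by auto
            then show "p \<in> insert 0 {q..<q + n}" unfolding q_def by auto
          qed
        qed (use c0 in auto)
        also have "\<dots> = c 0 + (\<Sum>p\<in>{q..<q+n}. c p)" unfolding q_def by simp
        also have "\<dots> \<le> D + (\<Sum>i<n. c (i + q))" using c0 sum_shift[where g=c and n=n and m=q] by simp
        finally show ?thesis unfolding q_def .
      qed
      define NB where "NB = NA + nat \<lceil>2 * D / \<delta>\<rceil> + 1"
      have avgB: "(1 / real n) * (\<Sum>i<n. hdist (mm_img F (B (i + m))) (B (i + m + 1))) < \<delta>"
        if "NB \<le> n" "1 \<le> m" for n m :: nat
      proof -
        have nNA: "n \<ge> NA" using that unfolding NB_def by simp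
        have n0: "real n > 0" using nNA NA by simp
        have "real n \<ge> real (nat \<lceil>2 * D / \<delta>\<rceil>) + 1" using that(1) unfolding NB_def by simp
        then have "real n > 2 * D / \<delta>" by linarith
        then have nD: "real n * \<delta> > 2 * D" using \<open>\<delta>>0\<close> by (simp add: field_simps)
        have q1: "max (m div k) 1 \<ge> 1" by simp
        have "(1 / real n) * (\<Sum>i<n. c (i + max (m div k) 1)) < \<delta>/2"
          using poN nNA q1 unfolding c_def by (simp add: add.assoc)
        then have cs: "(\<Sum>i<n. c (i + max (m div k) 1)) < real n * (\<delta>/2)"
          using n0 by (simp add: field_simps)
        have "(1 / real n) * (\<Sum>i<n. hdist (mm_img F (B (i + m))) (B (i + m + 1)))
            \<le> (1 / real n) * (D + (\<Sum>i<n. c (i + max (m div k) 1)))"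
          using sumB n0 by (intro mult_left_mono) auto
        also have "\<dots> < (1 / real n) * (real n * \<delta>)"
          using cs nD n0 by (intro mult_strict_left_mono) auto
        also have "\<dots> = \<delta>" using n0 by simp
        finally show ?thesis .
      qed
      have "avg_pseudo_orbit X F \<delta> B"
        unfolding avg_pseudo_orbit_def
      proof (intro conjI)
        show "\<forall>n. B n \<noteq> {} \<and> compact (B n) \<and> B n \<subseteq> X" using Bp by blast
        show "\<exists>x. B 0 = {x}" using Ax unfolding B_def by (simp add: mm_iter_0)
        have "NB > 0" unfolding NB_def by simp
        then show "\<exists>N::nat. N > 0 \<and> (\<forall>n\<ge>N. \<forall>m\<ge>1.
          (1 / real n) * (\<Sum>i<n. hdist (mm_img F (B (i + m))) (B (i + m + 1))) < \<delta>)"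
          using avgB by blast
      qed
      then obtain y where "y \<in> X" and lim: "limsup (\<lambda>n. ereal ((1 / real n) *
            (\<Sum>i<n. hdist (mm_iter F i {y}) (B i)))) < ereal \<epsilon>1"
        using sh by blast
      define h where "h t = hdist (mm_iter F t {y}) (B t)" for t
      have h0: "h t \<ge> 0" for t
        unfolding h_def using hb iterp[of "{y}" t] \<open>y\<in>X\<close> Bp by auto
      have "\<forall>\<^sub>F n in sequentially. ereal ((1 / real n) * (\<Sum>i<n. h i)) < ereal \<epsilon>1"
        using lim Limsup_le_iff[THEN iffD1, OF order.refl] unfolding h_def by blast
      then obtain N where N: "\<And>n. n \<ge> N \<Longrightarrow> (1 / real n) * (\<Sum>i<n. h i) < \<epsilon>1"
        unfolding eventually_sequentially by auto
      have "limsup (\<lambda>n. ereal ((1 / real n) *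
            (\<Sum>i<n. hdist (mm_iter (mm_pow F k) i {y}) (A i)))) \<le> ereal (\<epsilon>/2)"
      proof (rule Limsup_bounded, unfold eventually_sequentially, intro exI[of _ "N+1"] allI impI)
        fix n assume "N + 1 \<le> n"
        have n0: "real n > 0" using \<open>N + 1 \<le> n\<close> by simp
        have eq: "(\<Sum>i<n. hdist (mm_iter (mm_pow F k) i {y}) (A i)) = (\<Sum>i<n. h (k * i))"
          unfolding h_def B_def using k1 by (simp add: mm_iter_pow mm_iter_0)
        have "(\<Sum>i<n. h (k * i)) = (\<Sum>t\<in>(\<lambda>i. k * i) ` {..<n}. h t)"
          using k1 by (subst sum.reindex) (auto simp: inj_on_def)
        also have "\<dots> \<le> (\<Sum>t<k*n. h t)"
          using k1 h0 by (intro sum_mono2) auto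
        finally have le: "(\<Sum>i<n. h (k * i)) \<le> (\<Sum>t<k*n. h t)" .
        have "n \<le> k * n" using k1 by simp
        then have "k * n \<ge> N" using \<open>N + 1 \<le> n\<close> by linarith
        then have "(1 / real (k*n)) * (\<Sum>t<k*n. h t) < \<epsilon>1" by (rule N)
        then have "(\<Sum>t<k*n. h t) < \<epsilon>1 * real (k * n)" using n0 k1 by (simp add: field_simps)
        then have "(\<Sum>i<n. h (k * i)) < \<epsilon>1 * real k * real n" using le by simp
        then have "(1 / real n) * (\<Sum>i<n. h (k * i)) < \<epsilon>1 * real k" using n0 by (simp add: field_simps)
        also have "\<epsilon>1 * real k = \<epsilon>/2" unfolding \<epsilon>1_def using k1 by simp
        finally show "ereal ((1 / real n) * (\<Sum>i<n. hdist (mm_iter (mm_pow F k) i {y}) (A i))) \<le> ereal (\<epsilon>/2)"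
          unfolding eq by simp
      qed
      also have "\<dots> < ereal \<epsilon>" using \<open>\<epsilon>>0\<close> by simp
      finally show "\<exists>y\<in>X. limsup (\<lambda>n. ereal ((1 / real n) *
            (\<Sum>i<n. hdist (mm_iter (mm_pow F k) i {y}) (A i)))) < ereal \<epsilon>" using \<open>y\<in>X\<close> by blast
    qed
  qed
qed

end
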